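(* For integers $n\geq 3$, $p\geq 2$ and $m \geq 1$, $\chi_\rho(FSSD_m(K_n\star P_p)) = n+3$.
   Context: All graphs are finite and simple. For a positive integer $i$, an $i$-packing in a graph is a set of vertices any two distinct members of which are at distance greater than $i$. The packing chromatic number $\chi_\rho(H)$ is the smallest $k$ such that $V(H)$ can be partitioned into sets $V_1,\dots,V_k$ with each $V_i$ an $i$-packing. For a positive integer $m$, $FSSD_m(G)$ is obtained from $G$ by replacing each edge $xy$ by a copy of $K_{2,m}$: the edge $xy$ is deleted and $m$ new vertices are added, each adjacent to exactly $x$ and $y$. The neighborhood corona $G\star H$ of graphs $G$ (with vertices $w_1,\dots,w_{n}$) and $H$ consists of one copy of $G$ and $n$ copies $H_1,\dots,H_n$ of $H$ (each retaining the edges of $H$), where every vertex of $H_i$ is additionally joined to every neighbor of $w_i$ in $G$. $K_n$ is the complete graph and $P_p$ the path on $p$ vertices. *)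

theory Defs
  imports Main
begin

text \<open>A finite simple graph is represented as a pair (V, E) of a vertex set and a
set of edges, each edge being a 2-element subset of V.\<close>

type_synonym 'a graph = "'a set \<times> 'a set set"

definition verts :: "'a graph \<Rightarrow> 'a set" where "verts G = fst G"
definition edges :: "'a graph \<Rightarrow> 'a set set" where "edges G = snd G"

definition walk :: "'a graph \<Rightarrow> 'a list \<Rightarrow> bool" where
  "walk G xs \<longleftrightarrow> xs \<noteq> [] \<and> set xs \<subseteq> verts G \<and>
     (\<forall>k. Suc k < length xs \<longrightarrow> {xs ! k, xs ! Suc k} \<in> edges G)"

definition dist_le :: "'a graph \<Rightarrow> nat \<Rightarrow> 'a \<Rightarrow> 'a \<Rightarrow> bool" where
  "dist_le G i u v \<longleftrightarrow> (\<exists>xs. walk G xs \<and> hd xs = u \<and> last xs = v \<and> length xs \<le> Suc i)"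

definition packing :: "'a graph \<Rightarrow> nat \<Rightarrow> 'a set \<Rightarrow> bool" where
  "packing G i S \<longleftrightarrow> S \<subseteq> verts G \<and>
     (\<forall>u\<in>S. \<forall>v\<in>S. u \<noteq> v \<longrightarrow> \<not> dist_le G i u v)"

definition packing_coloring :: "'a graph \<Rightarrow> nat \<Rightarrow> ('a \<Rightarrow> nat) \<Rightarrow> bool" where
  "packing_coloring G k c \<longleftrightarrow> (\<forall>v\<in>verts G. c v \<in> {1..k}) \<and>
     (\<forall>i\<in>{1..k}. packing G i {v\<in>verts G. c v = i})"

definition packing_chromatic_number :: "'a graph \<Rightarrow> nat" where
  "packing_chromatic_number G = (LEAST k. \<exists>c. packing_coloring G k c)"

definition complete_graph :: "nat \<Rightarrow> nat graph" where
  "complete_graph n = ({0..<n}, {{i, j} | i j. i < n \<and> j < n \<and> i \<noteq> j})"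

definition path_graph :: "nat \<Rightarrow> nat graph" where
  "path_graph p = ({0..<p}, {{i, Suc i} | i. Suc i < p})"

text \<open>Neighborhood corona G * H: vertex Inl w is w in G; Inr (w, h) is vertex h of the
copy H_w of H attached to w.\<close>
definition nbh_corona :: "'a graph \<Rightarrow> 'b graph \<Rightarrow> ('a + ('a \<times> 'b)) graph" where
  "nbh_corona G H =
    (Inl ` verts G \<union> {Inr (w, h) | w h. w \<in> verts G \<and> h \<in> verts H},
     (\<lambda>e. Inl ` e) ` edges G
     \<union> {{Inr (w, h), Inr (w, h')} | w h h'. w \<in> verts G \<and> {h, h'} \<in> edges H}
     \<union> {{Inr (w, h), Inl x} | w h x. h \<in> verts H \<and> {w, x} \<in> edges G})"

text \<open>FSSD_m(G): each edge e replaced by K_{2,m}; new vertices Inr (e, j), j < m,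
adjacent exactly to the two ends of e; original edges deleted.\<close>
definition fssd :: "nat \<Rightarrow> 'a graph \<Rightarrow> ('a + ('a set \<times> nat)) graph" where
  "fssd m G =
    (Inl ` verts G \<union> {Inr (e, j) | e j. e \<in> edges G \<and> j < m},
     {{Inl x, Inr (e, j)} | x e j. e \<in> edges G \<and> j < m \<and> x \<in> e})"

end

theory Submission
  imports Defs
begin

lemma walk_snoc:
  assumes "walk G xs" "{last xs, y} \<in> edges G" "y \<in> verts G"
  shows "walk G (xs @ [y])"
  unfolding walk_def
proof (intro conjI allI impI)
  show "xs @ [y] \<noteq> []" by simp
  show "set (xs @ [y]) \<subseteq> verts G" using assms unfolding walk_def by auto
  fix k assume k: "Suc k < length (xs @ [y])"
  show "{(xs @ [y]) ! k, (xs @ [y]) ! Suc k} \<in> edges G"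
  proof (cases "Suc k < length xs")
    case True
    then show ?thesis using assms(1) unfolding walk_def by (simp add: nth_append)
  next
    case False
    with k have kk: "Suc k = length xs" by simp
    have "xs \<noteq> []" using assms(1) unfolding walk_def by simp
    then have "xs ! k = last xs" using kk by (metis diff_Suc_1 last_conv_nth)
    then show ?thesis using kk assms(2) by (simp add: nth_append)
  qed
qed

lemma dist_step:
  assumes "dist_le G i a b" "{b, c} \<in> edges G" "c \<in> verts G"
  shows "dist_le G (Suc i) a c"
proof -
  obtain xs where xs: "walk G xs" "hd xs = a" "last xs = b" "length xs \<le> Suc i"
    using assms(1) unfolding dist_le_def by blast
  have ne: "xs \<noteq> []" using xs(1) unfolding walk_def by simp
  have "walk G (xs @ [c])" using walk_snoc[OF xs(1)] xs(3) assms(2,3) by simp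
  moreover have "hd (xs @ [c]) = a" using ne xs(2) by simp
  moreover have "last (xs @ [c]) = c" by simp
  moreover have "length (xs @ [c]) \<le> Suc (Suc i)" using xs(4) by simp
  ultimately show ?thesis unfolding dist_le_def by blast
qed

lemma dist0: "a \<in> verts G \<Longrightarrow> dist_le G 0 a a"
  unfolding dist_le_def walk_def by (rule exI[of _ "[a]"]) auto

lemma dist_mono: "dist_le G i a b \<Longrightarrow> i \<le> j \<Longrightarrow> dist_le G j a b"
  unfolding dist_le_def by auto

lemma pc_mono:
  assumes "packing_coloring G k c" "k \<le> k'"
  shows "packing_coloring G k' c"
proof -
  have "packing G i {v \<in> verts G. c v = i}" if "i \<in> {1..k'}" for i
  proof (cases "i \<le> k")
    case True then show ?thesis using assms(1) that unfolding packing_coloring_def by auto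
  next
    case False
    have "\<forall>v\<in>verts G. c v \<le> k" using assms(1) unfolding packing_coloring_def by auto
    then show ?thesis unfolding packing_def using False by fastforce
  qed
  then show ?thesis using assms unfolding packing_coloring_def by auto
qed

lemma conflict:
  assumes "packing_coloring G k c" "v1 \<in> verts G" "v2 \<in> verts G" "v1 \<noteq> v2"
    "c v1 = c v2" "dist_le G d v1 v2" "d \<le> c v1"
  shows False
proof -
  have "c v1 \<in> {1..k}" using assms unfolding packing_coloring_def by auto
  then have "packing G (c v1) {v \<in> verts G. c v = c v1}" using assms(1) unfolding packing_coloring_def by auto
  then show False using assms dist_mono[OF assms(6,7)] unfolding packing_def by auto
qed

locale fsd =
  fixes n p m :: nat
  assumes n3: "n \<ge> 3" and p2: "p \<ge> 2" and m1: "m \<ge> 1"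
begin

definition "G0 = nbh_corona (complete_graph n) (path_graph p)"
definition "F = fssd m G0"

lemma vertsF: "verts F = Inl ` verts G0 \<union> {Inr (e, j) | e j. e \<in> edges G0 \<and> j < m}"
  unfolding F_def fssd_def verts_def edges_def by simp

lemma edgesF: "edges F = {{Inl x, Inr (e, j)} | x e j. e \<in> edges G0 \<and> j < m \<and> x \<in> e}"
  unfolding F_def fssd_def verts_def edges_def by simp

lemma vertsG0: "verts G0 = Inl ` {0..<n} \<union> {Inr (w, h) | w h. w < n \<and> h < p}"
  unfolding G0_def nbh_corona_def complete_graph_def path_graph_def verts_def by simp

lemma edgesG0: "edges G0 =
     (\<lambda>e. Inl ` e) ` {{i, j} | i j. i < n \<and> j < n \<and> i \<noteq> j}
     \<union> {{Inr (w, h), Inr (w, h')} | w h h'. w \<in> {0..<n} \<and> {h, h'} \<in> {{i, Suc i} | i. Suc i < p}}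
     \<union> {{Inr (w, h), Inl x} | w h x. h \<in> {0..<p} \<and> {w, x} \<in> {{i, j} | i j. i < n \<and> j < n \<and> i \<noteq> j}}"
  unfolding G0_def nbh_corona_def complete_graph_def path_graph_def verts_def edges_def by simp

lemma vL: "x < n \<Longrightarrow> Inl x \<in> verts G0" unfolding vertsG0 by auto
lemma vR: "w < n \<Longrightarrow> h < p \<Longrightarrow> Inr (w, h) \<in> verts G0" unfolding vertsG0 by blast
lemma eLL: "x < n \<Longrightarrow> y < n \<Longrightarrow> x \<noteq> y \<Longrightarrow> {Inl x, Inl y} \<in> edges G0"
proof -
  assume a: "x < n" "y < n" "x \<noteq> y"
  have "{x, y} \<in> {{i, j} | i j. i < n \<and> j < n \<and> i \<noteq> j}" using a by blast
  moreover have "{Inl x, Inl y} = Inl ` {x, y}" by simp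
  ultimately show ?thesis unfolding edgesG0 by (intro UnI1) (rule image_eqI)
qed
lemma eRL: "w < n \<Longrightarrow> x < n \<Longrightarrow> x \<noteq> w \<Longrightarrow> h < p \<Longrightarrow> {Inr (w, h), Inl x} \<in> edges G0"
proof -
  assume a: "w < n" "x < n" "x \<noteq> w" "h < p"
  have eq: "{w, x} \<in> {{i, j} | i j. i < n \<and> j < n \<and> i \<noteq> j}" using a by blast
  have "\<exists>w' h' x'. {Inr (w, h), Inl x} = {Inr (w', h'), Inl x'} \<and> h' \<in> {0..<p} \<and> {w', x'} \<in> {{i, j} | i j. i < n \<and> j < n \<and> i \<noteq> j}"
    apply (rule exI[of _ w], rule exI[of _ h], rule exI[of _ x])
    using a eq by (simp only: atLeastLessThan_iff) simp
  then show ?thesis unfolding edgesG0 by (intro UnI2) simp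
qed
lemma eRR: "w < n \<Longrightarrow> {Inr (w, 0), Inr (w, Suc 0)} \<in> edges G0"
proof -
  assume a: "w < n"
  have "{0, Suc 0} \<in> {{i, Suc i} | i. Suc i < p}" using p2 by auto
  then have "\<exists>w' h h'. {Inr (w, 0), Inr (w, Suc 0)} = {Inr (w', h), Inr (w', h')} \<and> w' \<in> {0..<n} \<and> {h, h'} \<in> {{i, Suc i} | i. Suc i < p}"
    using a by auto
  then show ?thesis unfolding edgesG0 by (intro UnI1 UnI2) simp
qed

definition "adj a b \<longleftrightarrow> {a, b} \<in> edges F \<and> a \<in> verts F \<and> b \<in> verts F"

lemma adj_sym: "adj a b \<Longrightarrow> adj b a"
  unfolding adj_def by (simp add: insert_commute)

lemma adjI: "e \<in> edges G0 \<Longrightarrow> x \<in> e \<Longrightarrow> x \<in> verts G0 \<Longrightarrow> j < m \<Longrightarrow> adj (Inl x) (Inr (e, j))"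
proof -
  assume a: "e \<in> edges G0" "x \<in> e" "x \<in> verts G0" "j < m"
  have "\<exists>x' e' j'. {Inl x, Inr (e, j)} = {Inl x', Inr (e', j')} \<and> e' \<in> edges G0 \<and> j' < m \<and> x' \<in> e'"
    apply (rule exI[of _ x], rule exI[of _ e], rule exI[of _ j])
    using a by simp
  then have "{Inl x, Inr (e, j)} \<in> edges F" unfolding edgesF by simp
  moreover have "Inl x \<in> verts F" unfolding vertsF using a by simp
  moreover have "Inr (e, j) \<in> verts F" unfolding vertsF using a by simp
  ultimately show ?thesis unfolding adj_def by simp
qed

lemma adjI': "e \<in> edges G0 \<Longrightarrow> x \<in> e \<Longrightarrow> x \<in> verts G0 \<Longrightarrow> j < m \<Longrightarrow> adj (Inr (e, j)) (Inl x)"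
  by (rule adj_sym[OF adjI])

lemma dstep: assumes "dist_le F i a b" "adj b c" shows "dist_le F (Suc i) a c"
  using dist_step[OF assms(1)] assms(2) unfolding adj_def by simp

lemma d1: assumes "adj a b" shows "dist_le F 1 a b"
proof -
  have "a \<in> verts F" using assms unfolding adj_def by simp
  then have "dist_le F 0 a a" by (rule dist0)
  then show ?thesis using dstep[OF _ assms] by simp
qed


abbreviation LV :: "nat \<Rightarrow> (nat + nat \<times> nat) + ((nat + nat \<times> nat) set \<times> nat)"
  where "LV w \<equiv> Inl (Inl w)"
abbreviation RV :: "nat \<Rightarrow> nat \<Rightarrow> (nat + nat \<times> nat) + ((nat + nat \<times> nat) set \<times> nat)"
  where "RV w h \<equiv> Inl (Inr (w, h))"
abbreviation SV :: "nat \<Rightarrow> nat \<Rightarrow> (nat + nat \<times> nat) + ((nat + nat \<times> nat) set \<times> nat)"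
  where "SV x y \<equiv> Inr ({Inl x, Inl y}, 0)"
abbreviation TV :: "nat \<Rightarrow> nat \<Rightarrow> nat \<Rightarrow> (nat + nat \<times> nat) + ((nat + nat \<times> nat) set \<times> nat)"
  where "TV w h x \<equiv> Inr ({Inr (w, h), Inl x}, 0)"
abbreviation PV :: "nat \<Rightarrow> (nat + nat \<times> nat) + ((nat + nat \<times> nat) set \<times> nat)"
  where "PV w \<equiv> Inr ({Inr (w, 0), Inr (w, Suc 0)}, 0)"

lemma m0: "0 < m" using m1 by simp

lemma aLS1: "x < n \<Longrightarrow> y < n \<Longrightarrow> x \<noteq> y \<Longrightarrow> adj (LV x) (SV x y)"
  by (rule adjI[OF eLL _ vL m0]) auto
lemma aLS2: "x < n \<Longrightarrow> y < n \<Longrightarrow> x \<noteq> y \<Longrightarrow> adj (LV y) (SV x y)"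
  by (rule adjI[OF eLL _ vL m0]) auto
lemma aRT: "w < n \<Longrightarrow> x < n \<Longrightarrow> x \<noteq> w \<Longrightarrow> h < p \<Longrightarrow> adj (RV w h) (TV w h x)"
  by (rule adjI[OF eRL _ vR m0]) auto
lemma aLT: "w < n \<Longrightarrow> x < n \<Longrightarrow> x \<noteq> w \<Longrightarrow> h < p \<Longrightarrow> adj (LV x) (TV w h x)"
  by (rule adjI[OF eRL _ vL m0]) auto
lemma aRP: "w < n \<Longrightarrow> h < 2 \<Longrightarrow> adj (RV w h) (PV w)"
  using p2 by (intro adjI[OF eRR _ vR m0]) auto

lemmas adjs = aLS1 aLS2 aRT aLT aRP
lemmas adjs' = adjs[THEN adj_sym]

lemma other: "w < n \<Longrightarrow> \<exists>x. x < n \<and> x \<noteq> w"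
  using n3 by (intro exI[of _ "if w = 0 then 1 else 0"]) auto

lemma other2: "w < n \<Longrightarrow> \<exists>x x'. x < n \<and> x' < n \<and> x \<noteq> w \<and> x' \<noteq> w \<and> x \<noteq> x'"
proof -
  assume "w < n"
  show ?thesis
  proof (cases "w = 0")
    case True then show ?thesis using n3 by (intro exI[of _ 1] exI[of _ 2]) auto
  next
    case False
    show ?thesis
    proof (cases "w = 1")
      case True then show ?thesis using n3 by (intro exI[of _ 0] exI[of _ 2]) auto
    next
      case False
      then show ?thesis using n3 \<open>w \<noteq> 0\<close> by (intro exI[of _ 0] exI[of _ 1]) auto
    qed
  qed
qed

end

locale ctx = fsd +
  fixes c
  assumes pc: "packing_coloring F (n + 2) c"
begin

lemma cf: "dist_le F d v1 v2 \<Longrightarrow> v1 \<noteq> v2 \<Longrightarrow> c v1 = c v2 \<Longrightarrow> d \<le> c v1 \<Longrightarrow> False"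
proof -
  assume a: "dist_le F d v1 v2" "v1 \<noteq> v2" "c v1 = c v2" "d \<le> c v1"
  obtain xs where xs: "walk F xs" "hd xs = v1" "last xs = v2"
    using a(1) unfolding dist_le_def by blast
  have "xs \<noteq> []" "set xs \<subseteq> verts F" using xs(1) unfolding walk_def by auto
  then have "v1 \<in> verts F" "v2 \<in> verts F" using xs(2,3) by auto
  then show False using conflict[OF pc _ _ a(2,3,1,4)] by blast
qed

lemma crange: "adj v v' \<Longrightarrow> 1 \<le> c v \<and> c v \<le> n + 2"
  using pc unfolding packing_coloring_def adj_def by auto

lemma crange': "adj v' v \<Longrightarrow> 1 \<le> c v \<and> c v \<le> n + 2"
  using crange adj_sym by blast


lemma L_not1:
  assumes w: "w < n"
  shows "c (LV w) \<noteq> 1"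
proof
  assume c1: "c (LV w) = 1"
  define X where "X = {..<n} - {w}"
  define N where "N = (\<lambda>x. SV w x) ` X \<union> (\<lambda>y. TV y 0 w) ` X \<union> (\<lambda>y. TV y 1 w) ` X"
  have adjN: "adj (LV w) v" if "v \<in> N" for v
    using that w p2 unfolding N_def X_def by (auto intro: adjs)
  have not1: "c v \<noteq> 1" if "v \<in> N" for v
  proof
    assume "c v = 1"
    moreover have "LV w \<noteq> v" using that unfolding N_def by auto
    ultimately show False using cf[OF d1[OF adjN[OF that]]] c1 by auto
  qed
  have inj: "inj_on c N"
  proof (rule inj_onI)
    fix v v' assume v: "v \<in> N" "v' \<in> N" "c v = c v'"
    show "v = v'"
    proof (rule ccontr)
      assume ne: "v \<noteq> v'"
      have "dist_le F (Suc 1) v v'"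
        using dstep[OF d1[OF adj_sym[OF adjN[OF v(1)]]] adjN[OF v(2)]] .
      moreover have "1 \<le> c v" using crange'[OF adjN[OF v(1)]] by simp
      ultimately show False using cf ne v(3) not1[OF v(1)] by fastforce
    qed
  qed
  have sub: "c ` N \<subseteq> {2..n+2}"
    using crange'[OF adjN] not1 by fastforce
  have cX: "card X = n - 1" unfolding X_def using w by simp
  have i1: "inj_on (\<lambda>x. SV w x) X" unfolding X_def by (rule inj_onI) (auto simp: doubleton_eq_iff)
  have i2: "inj_on (\<lambda>y. TV y 0 w) X" by (rule inj_onI) (auto simp: doubleton_eq_iff)
  have i3: "inj_on (\<lambda>y. TV y 1 w) X" by (rule inj_onI) (auto simp: doubleton_eq_iff)
  have fX: "finite X" unfolding X_def by simp
  have "card N = card X + card X + card X"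
    unfolding N_def
    apply (subst card_Un_disjoint)
       apply (simp add: fX)
      apply (simp add: fX)
     apply (force simp: doubleton_eq_iff)
    apply (subst card_Un_disjoint)
       apply (simp add: fX)
      apply (simp add: fX)
     apply (force simp: doubleton_eq_iff)
    using card_image[OF i1] card_image[OF i2] card_image[OF i3] by simp
  then have cN: "card N = 3 * (n - 1)" using cX by simp
  have "card (c ` N) \<le> card {2..n+2}" by (rule card_mono[OF _ sub]) simp
  then have "card N \<le> n + 1" using card_image[OF inj] by simp
  then show False using cN n3 by simp
qed


lemma Lrange: "w < n \<Longrightarrow> 2 \<le> c (LV w) \<and> c (LV w) \<le> n + 2"
proof -
  assume w: "w < n"
  obtain x where "x < n" "x \<noteq> w" using other[OF w] by blast
  then have "adj (LV w) (SV x w)" using w by (intro adjs) auto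
  then show ?thesis using crange L_not1[OF w] by fastforce
qed

lemma Ldist: "w < n \<Longrightarrow> w' < n \<Longrightarrow> w \<noteq> w' \<Longrightarrow> c (LV w) \<noteq> c (LV w')"
proof
  assume a: "w < n" "w' < n" "w \<noteq> w'" "c (LV w) = c (LV w')"
  have "dist_le F (Suc 1) (LV w) (LV w')"
    using dstep[OF d1[OF aLS1] adj_sym[OF aLS2]] a by auto
  then show False using cf a Lrange[OF a(1)] by fastforce
qed

lemma ex_u: "\<exists>u. u \<in> {2..n+2} \<and> (\<forall>y<n. c (LV y) \<noteq> u) \<and> (\<forall>k\<in>{2..n+2}. k \<noteq> u \<longrightarrow> (\<exists>y<n. c (LV y) = k))"
proof -
  define A where "A = (\<lambda>y. c (LV y)) ` {..<n}"
  have inj: "inj_on (\<lambda>y. c (LV y)) {..<n}" by (rule inj_onI) (use Ldist in auto)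
  have cA: "card A = n" unfolding A_def using card_image[OF inj] by simp
  have sub: "A \<subseteq> {2..n+2}" unfolding A_def using Lrange by auto
  have "card ({2..n+2} - A) = 1"
    using card_Diff_subset[OF _ sub] cA by (simp add: A_def)
  then obtain u where u: "{2..n+2} - A = {u}" by (rule card_1_singletonE)
  have "u \<in> {2..n+2}" "u \<notin> A" using u by blast+
  moreover have "k \<in> A" if "k \<in> {2..n+2}" "k \<noteq> u" for k using u that by blast
  ultimately show ?thesis unfolding A_def by (intro exI[of _ u]) blast
qed

end

locale ctx2 = ctx +
  fixes u
  assumes u1: "u \<in> {2..n+2}" and u2: "\<And>y. y < n \<Longrightarrow> c (LV y) \<noteq> u"
    and u3: "\<And>k. k \<in> {2..n+2} \<Longrightarrow> k \<noteq> u \<Longrightarrow> \<exists>y<n. c (LV y) = k"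
begin


lemma cR: "w < n \<Longrightarrow> h < p \<Longrightarrow> 1 \<le> c (RV w h) \<and> c (RV w h) \<le> n + 2"
proof -
  assume a: "w < n" "h < p"
  obtain x where x: "x < n" "x \<noteq> w" using other[OF a(1)] by blast
  show ?thesis using crange[OF aRT[OF a(1) x a(2)]] .
qed

lemma F1:
  assumes w: "w < n" and h: "h < p" and n1: "c (RV w h) \<noteq> 1" and nu: "c (RV w h) \<noteq> u"
  shows "c (RV w h) = c (LV w) \<and> c (LV w) \<le> 3"
proof -
  obtain x where x: "x < n" "x \<noteq> w" using other[OF w] by blast
  have r: "2 \<le> c (RV w h) \<and> c (RV w h) \<le> n + 2" using cR[OF w h] n1 by auto
  obtain y where y: "y < n" "c (LV y) = c (RV w h)" using u3[of "c (RV w h)"] r nu by auto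
  have yw: "y = w"
  proof (rule ccontr)
    assume yw: "y \<noteq> w"
    have "dist_le F (Suc 1) (RV w h) (LV y)"
      using dstep[OF d1[OF aRT[OF w y(1) yw h]] adj_sym[OF aLT[OF w y(1) yw h]]] .
    then show False using cf r y by force
  qed
  moreover have "c (RV w h) \<le> 3"
  proof (rule ccontr)
    assume "\<not> c (RV w h) \<le> 3"
    have "dist_le F (Suc (Suc (Suc 1))) (RV w h) (LV w)"
      using dstep[OF dstep[OF dstep[OF d1[OF aRT[OF w x h]] adj_sym[OF aLT[OF w x h]]]
          aLS1[OF x(1) w x(2)]] adj_sym[OF aLS2[OF x(1) w x(2)]]] .
    then show False using cf \<open>\<not> c (RV w h) \<le> 3\<close> y yw by force
  qed
  ultimately show ?thesis using y by simp
qed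

lemma F2:
  assumes w: "w < n" and x: "x < n" "x \<noteq> w" and h: "h < p" and n1: "c (TV w h x) \<noteq> 1"
  shows "(c (TV w h x) = 2 \<or> c (TV w h x) = u) \<and> c (TV w h x) \<noteq> c (LV x)"
proof -
  have r: "2 \<le> c (TV w h x) \<and> c (TV w h x) \<le> n + 2" using crange'[OF aRT[OF w x h]] n1 by auto
  have d: "c (TV w h x) \<noteq> c (LV x)"
  proof
    assume e: "c (TV w h x) = c (LV x)"
    show False using cf[OF d1[OF adj_sym[OF aLT[OF w x h]]]] e r by force
  qed
  moreover have "c (TV w h x) = 2 \<or> c (TV w h x) = u"
  proof (rule ccontr)
    assume nn: "\<not> (c (TV w h x) = 2 \<or> c (TV w h x) = u)"
    obtain y where y: "y < n" "c (LV y) = c (TV w h x)" using u3[of "c (TV w h x)"] r nn by auto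
    have yx: "y \<noteq> x" using y d by auto
    have "dist_le F (Suc (Suc 1)) (TV w h x) (LV y)"
    proof (cases "y = w")
      case True
      show ?thesis using dstep[OF dstep[OF d1[OF adj_sym[OF aLT[OF w x h]]] aLS1[OF x(1) w x(2)]]
          adj_sym[OF aLS2[OF x(1) w x(2)]]] True by simp
    next
      case False
      show ?thesis using dstep[OF dstep[OF d1[OF adj_sym[OF aRT[OF w x h]]] aRT[OF w y(1) False h]]
          adj_sym[OF aLT[OF w y(1) False h]]] .
    qed
    then show False using cf y r nn by force
  qed
  ultimately show ?thesis by blast
qed

lemma F3:
  assumes w: "w < n" and nn: "c (PV w) \<noteq> 1" "c (PV w) \<noteq> 2" "c (PV w) \<noteq> u"
  shows "c (PV w) = c (LV w)"
proof -
  have r: "1 \<le> c (PV w) \<and> c (PV w) \<le> n + 2" using crange'[OF aRP[OF w, of 0]] by simp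
  obtain y where y: "y < n" "c (LV y) = c (PV w)" using u3[of "c (PV w)"] r nn by auto
  have "y = w"
  proof (rule ccontr)
    assume yw: "y \<noteq> w"
    have "dist_le F (Suc (Suc 1)) (PV w) (LV y)"
      using dstep[OF dstep[OF d1[OF adj_sym[OF aRP[OF w, of 0]]] aRT[OF w y(1) yw, of 0]]
          adj_sym[OF aLT[OF w y(1) yw, of 0]]] p2 by simp
    then show False using cf y r nn by force
  qed
  then show ?thesis using y by simp
qed


lemma p0: "0 < p" and p1: "Suc 0 < p" using p2 by auto

lemma hp: "h < 2 \<Longrightarrow> h < p" using p2 by simp

lemma T_not1:
  assumes w: "w < n" and h: "h < 2" and c1: "c (RV w h) = 1" and x: "x < n" "x \<noteq> w"
  shows "c (TV w h x) \<noteq> 1"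
proof
  assume "c (TV w h x) = 1"
  then show False using cf[OF d1[OF aRT[OF w x hp[OF h]]]] c1 by force
qed

lemma T_dist:
  assumes w: "w < n" and h: "h < 2" and c1: "c (RV w h) = 1" and x: "x < n" "x \<noteq> w"
     and x': "x' < n" "x' \<noteq> w" and xx: "x \<noteq> x'"
  shows "c (TV w h x) \<noteq> c (TV w h x')"
proof
  assume e: "c (TV w h x) = c (TV w h x')"
  have "dist_le F (Suc 1) (TV w h x) (TV w h x')"
    using dstep[OF d1[OF adj_sym[OF aRT[OF w x hp[OF h]]]] aRT[OF w x' hp[OF h]]] .
  moreover have "TV w h x \<noteq> TV w h x'" using xx by (auto simp: doubleton_eq_iff)
  moreover have "1 \<le> c (TV w h x)" using crange'[OF aRT[OF w x hp[OF h]]] by simp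
  ultimately show False using cf e T_not1[OF w h c1 x] by force
qed

lemma R1:
  assumes w: "w < n" and h: "h < 2" and c1: "c (RV w h) = 1" and x: "x < n" "x \<noteq> w"
     and x': "x' < n" "x' \<noteq> w" and xx: "x \<noteq> x'"
  shows "u \<noteq> 2 \<and> (c (TV w h x) = 2 \<or> c (TV w h x) = u) \<and> (c (TV w h x') = 2 \<or> c (TV w h x') = u)
     \<and> c (TV w h x) \<noteq> c (TV w h x') \<and> c (LV w) \<noteq> 2"
proof -
  have t1: "c (TV w h x) = 2 \<or> c (TV w h x) = u"
    using F2[OF w x hp[OF h] T_not1[OF w h c1 x]] by blast
  have t2: "c (TV w h x') = 2 \<or> c (TV w h x') = u"
    using F2[OF w x' hp[OF h] T_not1[OF w h c1 x']] by blast
  have dd: "c (TV w h x) \<noteq> c (TV w h x')" by (rule T_dist[OF w h c1 x x' xx])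
  have u2: "u \<noteq> 2" using t1 t2 dd by auto
  have P1: "c (PV w) \<noteq> 1"
  proof
    assume "c (PV w) = 1"
    then show False using cf[OF d1[OF aRP[OF w h]]] c1 by force
  qed
  have PT: "c (PV w) \<noteq> c (TV w h z)" if z: "z < n" "z \<noteq> w" for z
  proof
    assume e: "c (PV w) = c (TV w h z)"
    have "dist_le F (Suc 1) (PV w) (TV w h z)"
      using dstep[OF d1[OF adj_sym[OF aRP[OF w h]]] aRT[OF w z hp[OF h]]] .
    then show False using cf e P1 crange'[OF aRP[OF w h]] by force
  qed
  have "c (PV w) \<noteq> 2" "c (PV w) \<noteq> u" using PT[OF x] PT[OF x'] t1 t2 dd by auto
  then have "c (PV w) = c (LV w)" using F3[OF w P1] by blast
  then have "c (LV w) \<noteq> 2" using \<open>c (PV w) \<noteq> 2\<close> by simp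
  then show ?thesis using u2 t1 t2 dd by blast
qed

lemma R1_n3:
  assumes w: "w < n" and h: "h < 2" and c1: "c (RV w h) = 1"
  shows "n = 3"
proof (rule ccontr)
  assume "n \<noteq> 3"
  then have n4: "n \<ge> 4" using n3 by simp
  obtain x x' where xs: "x < n" "x' < n" "x \<noteq> w" "x' \<noteq> w" "x \<noteq> x'" using other2[OF w] by blast
  have "\<exists>z. z < 4 \<and> z \<noteq> w \<and> z \<noteq> x \<and> z \<noteq> x'"
  proof -
    have "card ({0..<4::nat} - {w, x, x'}) \<ge> 1"
    proof -
      have "card {w, x, x'} \<le> 3" by (rule card_insert_le_m1) (auto simp: card_insert_le_m1 card_le_Suc_iff) 
      then have "card ({0..<4::nat} - {w, x, x'}) \<ge> 4 - 3"
        using diff_card_le_card_Diff[of "{w, x, x'}" "{0..<4::nat}"] by simp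
      then show ?thesis by simp
    qed
    then have "{0..<4::nat} - {w, x, x'} \<noteq> {}" by (metis card.empty not_one_le_zero)
    then show ?thesis by auto
  qed
  then obtain z where z: "z < 4" "z \<noteq> w" "z \<noteq> x" "z \<noteq> x'" by blast
  have zn: "z < n" using z n4 by simp
  have A: "c (TV w h x) = 2 \<or> c (TV w h x) = u" "c (TV w h x') = 2 \<or> c (TV w h x') = u"
      "c (TV w h x) \<noteq> c (TV w h x')" using R1[OF w h c1 xs(1,3) xs(2,4,5)] by blast+
  have B: "c (TV w h z) = 2 \<or> c (TV w h z) = u" using R1[OF w h c1 zn z(2) xs(1,3)] z by blast
  have "c (TV w h z) \<noteq> c (TV w h x)" by (rule T_dist[OF w h c1 zn z(2) xs(1,3)]) (use z in auto)
  moreover have "c (TV w h z) \<noteq> c (TV w h x')" by (rule T_dist[OF w h c1 zn z(2) xs(2,4)]) (use z in auto)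
  ultimately show False using A B by auto
qed


lemma R01: "w < n \<Longrightarrow> c (RV w 0) \<noteq> 1 \<Longrightarrow> c (RV w 0) = c (RV w (Suc 0)) \<Longrightarrow> False"
proof -
  assume a: "w < n" "c (RV w 0) \<noteq> 1" "c (RV w 0) = c (RV w (Suc 0))"
  have "dist_le F (Suc 1) (RV w 0) (RV w (Suc 0))"
    using dstep[OF d1[OF aRP[OF a(1), of 0]] adj_sym[OF aRP[OF a(1), of 1]]] by simp
  then show False using cf a cR[OF a(1) p0] by force
qed

lemma caseA_w:
  assumes w: "w < n" and n0: "c (RV w 0) \<noteq> 1" and n1: "c (RV w (Suc 0)) \<noteq> 1"
  shows "c (LV w) \<le> 3"
proof (rule ccontr)
  assume a: "\<not> c (LV w) \<le> 3"
  have "c (RV w 0) = u" using F1[OF w p0 n0] a by blast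
  moreover have "c (RV w (Suc 0)) = u" using F1[OF w p1 n1] a by blast
  ultimately show False using R01[OF w n0] by simp
qed

lemma caseA:
  assumes "\<And>w h. w < n \<Longrightarrow> h < 2 \<Longrightarrow> c (RV w h) \<noteq> 1"
  shows False
proof -
  have "c (LV w) \<le> 3" if "w < 3" for w
    using caseA_w[of w] assms[of w 0] assms[of w 1] that n3 by simp
  moreover have "2 \<le> c (LV w)" if "w < 3" for w using Lrange[of w] that n3 by simp
  moreover have "c (LV 0) \<noteq> c (LV 1)" "c (LV 0) \<noteq> c (LV 2)" "c (LV 1) \<noteq> c (LV 2)"
    using Ldist n3 by auto
  ultimately have "2 \<le> c (LV 0)" "c (LV 0) \<le> 3" "2 \<le> c (LV 1)" "c (LV 1) \<le> 3"
     "2 \<le> c (LV 2)" "c (LV 2) \<le> 3" "c (LV 0) \<noteq> c (LV 1)" "c (LV 0) \<noteq> c (LV 2)" "c (LV 1) \<noteq> c (LV 2)"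
    by auto
  then show False by presburger
qed

lemma core:
  assumes w: "w < n" and h: "h < 2" and c1: "c (RV w h) = 1" and x: "x < n" "x \<noteq> w"
     and x': "x' < n" "x' \<noteq> w" and xx: "x \<noteq> x'" and n3': "n = 3"
     and tu: "c (TV w h x) = u" and t2: "c (TV w h x') = 2"
  shows False
proof -
  have R: "u \<noteq> 2" "c (LV w) \<noteq> 2" using R1[OF w h c1 x x' xx] by blast+
  have u3': "3 \<le> u" using u1 R(1) by simp
  have ax': "c (LV x') \<noteq> 2" using F2[OF w x' hp[OF h]] t2 by simp
  have "2 \<in> {2..n+2}" by simp
  then obtain y where y: "y < n" "c (LV y) = 2" using u3[of 2] R(1) by metis
  have "y \<noteq> w" using y R(2) by metis
  moreover have "y \<noteq> x'" using y ax' by metis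
  ultimately have yx: "y = x" using y(1) w x x' xx n3' by linarith
  have notu: "c (RV x' h') \<noteq> u" if h': "h' < 2" for h'
  proof
    assume e: "c (RV x' h') = u"
    have xx2: "x \<noteq> x'" by (rule xx)
    have "dist_le F (Suc (Suc 1)) (TV w h x) (RV x' h')"
      using dstep[OF dstep[OF d1[OF adj_sym[OF aLT[OF w x hp[OF h]]]] aLT[OF x'(1) x(1) xx hp[OF h']]]
        adj_sym[OF aRT[OF x'(1) x(1) xx hp[OF h']]]] .
    then show False by (rule cf) (use tu e u3' in auto)
  qed
  have "\<exists>h'<2. c (RV x' h') = 1"
  proof (rule ccontr)
    assume "\<not> (\<exists>h'<2. c (RV x' h') = 1)"
    then have n0: "c (RV x' 0) \<noteq> 1" and n1: "c (RV x' (Suc 0)) \<noteq> 1" by auto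
    have "c (RV x' 0) = c (LV x')" using F1[OF x'(1) p0 n0 notu[of 0]] by simp
    moreover have "c (RV x' (Suc 0)) = c (LV x')" using F1[OF x'(1) p1 n1 notu[of "Suc 0"]] by simp
    ultimately show False using R01[OF x'(1) n0] by simp
  qed
  then obtain h' where h': "h' < 2" "c (RV x' h') = 1" by blast
  have xw: "x' \<noteq> w" by (rule x'(2))
  have wx': "w \<noteq> x'" using xw by (rule not_sym)
  have xx': "x \<noteq> x'" by (rule xx)
  have xw2: "x \<noteq> w" by (rule x(2))
  have "c (TV x' h' x) = 2 \<or> c (TV x' h' x) = u"
    using R1[OF x'(1) h'(1) h'(2) x(1) xx' w wx' xw2] by blast
  moreover have "c (TV x' h' x) \<noteq> c (LV x)"
    using F2[OF x'(1) x(1) xx' hp[OF h'(1)] T_not1[OF x'(1) h' x(1) xx']] by blast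
  ultimately have tu2: "c (TV x' h' x) = u" using y yx by metis
  have "dist_le F (Suc 1) (TV w h x) (TV x' h' x)"
    using dstep[OF d1[OF adj_sym[OF aLT[OF w x hp[OF h]]]] aLT[OF x'(1) x(1) xx' hp[OF h'(1)]]] .
  moreover have "TV w h x \<noteq> TV x' h' x" using wx' by (simp add: doubleton_eq_iff)
  ultimately show False by (rule cf) (use tu tu2 u3' in auto)
qed

lemma contradiction: False
proof (cases "\<exists>w h. w < n \<and> h < 2 \<and> c (RV w h) = 1")
  case False
  then show False using caseA by blast
next
  case True
  then obtain w h where wh: "w < n" "h < 2" "c (RV w h) = 1" by blast
  have nn: "n = 3" by (rule R1_n3[OF wh])
  obtain x x' where xs: "x < n" "x' < n" "x \<noteq> w" "x' \<noteq> w" "x \<noteq> x'" using other2[OF wh(1)] by blast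
  have A: "c (TV w h x) = 2 \<or> c (TV w h x) = u" "c (TV w h x') = 2 \<or> c (TV w h x') = u"
      "c (TV w h x) \<noteq> c (TV w h x')" using R1[OF wh xs(1,3) xs(2,4,5)] by blast+
  have xs5: "x' \<noteq> x" using xs(5) by (rule not_sym)
  show False
  proof (cases "c (TV w h x) = u")
    case True
    then have "c (TV w h x') = 2" using A by metis
    then show False using core[OF wh xs(1,3) xs(2,4,5) nn True] by blast
  next
    case False
    then have "c (TV w h x) = 2" "c (TV w h x') = u" using A by metis+
    then show False using core[OF wh xs(2,4) xs(1,3) xs5 nn] by blast
  qed
qed

end

context fsd
begin

lemma lower: "k \<le> n + 2 \<Longrightarrow> \<not> packing_coloring F k c"
proof
  assume k: "k \<le> n + 2" and pck: "packing_coloring F k c"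
  have pc2: "packing_coloring F (n + 2) c" by (rule pc_mono[OF pck k])
  interpret ctx n p m c by unfold_locales (rule pc2)
  obtain u where u: "u \<in> {2..n+2}" "\<forall>y<n. c (LV y) \<noteq> u" "\<forall>k\<in>{2..n+2}. k \<noteq> u \<longrightarrow> (\<exists>y<n. c (LV y) = k)"
    using ex_u by blast
  interpret ctx2 n p m c u by unfold_locales (use u in auto)
  show False by (rule contradiction)
qed

lemma eG0_E:
  assumes e: "e \<in> edges G0" and a: "Inr (w, h) \<in> e" and b: "Inr (w', h') \<in> e" and ne: "(w, h) \<noteq> (w', h')"
  shows "w = w' \<and> (h' = Suc h \<or> h = Suc h')"
  using e unfolding edgesG0
proof (elim UnE)
  assume "e \<in> (\<lambda>e. Inl ` e) ` {{i, j} |i j. i < n \<and> j < n \<and> i \<noteq> j}"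
  then obtain S where "e = Inl ` S" by blast
  then show ?thesis using a by blast
next
  assume "e \<in> {{Inr (w, h), Inr (w, h')} |w h h'. w \<in> {0..<n} \<and> {h, h'} \<in> {{i, Suc i} |i. Suc i < p}}"
  then obtain w0 h1 h2 i where e': "e = {Inr (w0, h1), Inr (w0, h2)}" "{h1, h2} = {i, Suc i}" by blast
  then have "h1 = i \<and> h2 = Suc i \<or> h1 = Suc i \<and> h2 = i" by (simp add: doubleton_eq_iff)
  then show ?thesis using a b ne e'(1) by auto
next
  assume "e \<in> {{Inr (w, h), Inl x} |w h x. h \<in> {0..<p} \<and> {w, x} \<in> {{i, j} |i j. i < n \<and> j < n \<and> i \<noteq> j}}"
  then obtain w0 h0 x where "e = {Inr (w0, h0), Inl x}" by blast
  then show ?thesis using a b ne by auto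
qed

lemma eF_E:
  assumes "{a, b} \<in> edges F"
  shows "(\<exists>x e j. a = Inl x \<and> b = Inr (e, j) \<and> e \<in> edges G0 \<and> x \<in> e) \<or>
         (\<exists>x e j. b = Inl x \<and> a = Inr (e, j) \<and> e \<in> edges G0 \<and> x \<in> e)"
proof -
  obtain x e j where "{a, b} = {Inl x, Inr (e, j)}" "e \<in> edges G0" "x \<in> e"
    using assms unfolding edgesF by blast
  then show ?thesis by (auto simp: doubleton_eq_iff)
qed

lemma short:
  assumes "dist_le G i a b" "i \<le> 3"
  shows "a = b \<or> {a, b} \<in> edges G \<or> (2 \<le> i \<and> (\<exists>s. {a, s} \<in> edges G \<and> {s, b} \<in> edges G)) \<or>
         (3 \<le> i \<and> (\<exists>s t. {a, s} \<in> edges G \<and> {s, t} \<in> edges G \<and> {t, b} \<in> edges G))"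
proof -
  obtain xs where xs: "walk G xs" "hd xs = a" "last xs = b" "length xs \<le> Suc i"
    using assms(1) unfolding dist_le_def by blast
  have ne: "xs \<noteq> []" and ed: "\<And>k. Suc k < length xs \<Longrightarrow> {xs ! k, xs ! Suc k} \<in> edges G"
    using xs(1) unfolding walk_def by auto
  consider (l1) "length xs = 1" | (l2) "length xs = 2" | (l3) "length xs = 3" | (l4) "length xs = 4"
    using ne xs(4) assms(2) by (cases "length xs") (auto, linarith)
  then show ?thesis
  proof cases
    case l1
    then obtain y where "xs = [y]" by (cases xs) auto
    then show ?thesis using xs by simp
  next
    case l2
    then obtain y z where "xs = [y, z]" by (cases xs; cases "tl xs") auto
    then show ?thesis using xs ed[of 0] by simp
  next
    case l3
    then obtain y z v where "xs = [y, z, v]" by (cases xs; cases "tl xs"; cases "tl (tl xs)") auto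
    then show ?thesis using xs ed[of 0] ed[of 1] by auto
  next
    case l4
    then obtain y z v q where "xs = [y, z, v, q]"
      by (cases xs; cases "tl xs"; cases "tl (tl xs)"; cases "tl (tl (tl xs))") auto
    then show ?thesis using xs ed[of 0] ed[of 1] ed[of 2] by auto
  qed
qed


definition col :: "(nat + nat \<times> nat) + ((nat + nat \<times> nat) set \<times> nat) \<Rightarrow> nat" where
  "col v = (case v of Inr _ \<Rightarrow> 1 | Inl (Inl w) \<Rightarrow> w + 4 | Inl (Inr (w, h)) \<Rightarrow> if even h then 2 else 3)"

lemma col_range: "v \<in> verts F \<Longrightarrow> col v \<in> {1..n+3}"
  unfolding vertsF vertsG0 col_def by auto

lemma noLL: "{Inl a, Inl b} \<notin> edges F"
  using eF_E by blast

lemma noRR: "{Inr a, Inr b} \<notin> edges F"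
  using eF_E by blast

lemma two_path_RR:
  assumes "{RV w h, s} \<in> edges F" "{s, RV w' h'} \<in> edges F" "(w, h) \<noteq> (w', h')"
  shows "w = w' \<and> (h' = Suc h \<or> h = Suc h')"
proof -
  obtain e j where s: "s = Inr (e, j)" "e \<in> edges G0" "Inr (w, h) \<in> e"
    using eF_E[OF assms(1)] by blast
  have "Inr (w', h') \<in> e" using eF_E[OF assms(2)] s by auto
  then show ?thesis using eG0_E[OF s(2,3)] assms(3) by blast
qed

lemma three_path_LL:
  assumes "{Inl a, s} \<in> edges F" "{s, t} \<in> edges F" "{t, Inl b} \<in> edges F"
  shows False
proof -
  obtain e j where s: "s = Inr (e, j)" using eF_E[OF assms(1)] by blast
  obtain x where t: "t = Inl x" using eF_E[OF assms(2)] s by blast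
  show False using assms(3) t noLL by simp
qed

lemma vcases:
  obtains w where "v = LV w" | w h where "v = RV w h" | y where "v = Inr y"
  by (metis sum.exhaust prod.exhaust)

lemma col1: "col v = 1 \<Longrightarrow> \<exists>y. v = Inr y"
  by (cases v rule: vcases) (auto simp: col_def split: if_splits)

lemma col23: "col v = 2 \<or> col v = 3 \<Longrightarrow> \<exists>w h. v = RV w h \<and> (col v = 2 \<longleftrightarrow> even h)"
  by (cases v rule: vcases) (auto simp: col_def)

lemma col4: "col v = i \<Longrightarrow> 4 \<le> i \<Longrightarrow> v = LV (i - 4)"
  by (cases v rule: vcases) (auto simp: col_def split: if_splits)

lemma pack_upper: "packing_coloring F (n + 3) col"
  unfolding packing_coloring_def
proof (intro conjI ballI)
  fix v assume "v \<in> verts F" then show "col v \<in> {1..n+3}" by (rule col_range)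
next
  fix i assume i: "i \<in> {1..n+3}"
  show "packing F i {v \<in> verts F. col v = i}"
    unfolding packing_def
  proof (intro conjI ballI impI)
    show "{v \<in> verts F. col v = i} \<subseteq> verts F" by blast
  next
    fix a b assume a: "a \<in> {v \<in> verts F. col v = i}" and b: "b \<in> {v \<in> verts F. col v = i}" and ab: "a \<noteq> b"
    have ca: "col a = i" and cb: "col b = i" using a b by auto
    show "\<not> dist_le F i a b"
    proof
      assume d: "dist_le F i a b"
      consider (i1) "i = 1" | (i23) "i = 2 \<or> i = 3" | (i4) "i \<ge> 4" using i by force
      then show False
      proof cases
        case i1
        obtain y y' where "a = Inr y" "b = Inr y'" using col1 ca cb i1 by metis
        moreover have "a = b \<or> {a, b} \<in> edges F" using short[OF d] i1 by simp
        ultimately show False using ab noRR by auto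
      next
        case i23
        obtain w h where wh: "a = RV w h" "col a = 2 \<longleftrightarrow> even h" using col23 ca i23 by metis
        obtain w' h' where wh': "b = RV w' h'" "col b = 2 \<longleftrightarrow> even h'" using col23 cb i23 by metis
        have par: "even h = even h'" using wh(2) wh'(2) ca cb by simp
        have ne: "(w, h) \<noteq> (w', h')" using ab wh(1) wh'(1) by auto
        have "{a, b} \<notin> edges F" using wh(1) wh'(1) noLL by simp
        moreover have "\<not> (\<exists>s t. {a, s} \<in> edges F \<and> {s, t} \<in> edges F \<and> {t, b} \<in> edges F)"
          using three_path_LL wh(1) wh'(1) by blast
        moreover have "\<not> (\<exists>s. {a, s} \<in> edges F \<and> {s, b} \<in> edges F)"
        proof
          assume "\<exists>s. {a, s} \<in> edges F \<and> {s, b} \<in> edges F"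
          then obtain s where "{RV w h, s} \<in> edges F" "{s, RV w' h'} \<in> edges F" using wh(1) wh'(1) by blast
          then have "h' = Suc h \<or> h = Suc h'" using two_path_RR ne by blast
          then show False using par by auto
        qed
        moreover have "i \<le> 3" using i23 by auto
        ultimately show False using short[OF d] ab by blast
      next
        case i4
        then have "a = LV (i - 4)" "b = LV (i - 4)" using col4 ca cb by blast+
        then show False using ab by simp
      qed
    qed
  qed
qed

end

theorem theorem1:
  fixes n p m :: nat
  assumes "n \<ge> 3" and "p \<ge> 2" and "m \<ge> 1"
  shows "packing_chromatic_number (fssd m (nbh_corona (complete_graph n) (path_graph p))) = n + 3"
proof -
  interpret fsd n p m by unfold_locales (use assms in auto)
  have FF: "fssd m (nbh_corona (complete_graph n) (path_graph p)) = F" by (simp add: F_def G0_def)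
  show ?thesis unfolding packing_chromatic_number_def FF
  proof (rule Least_equality)
    show "\<exists>c. packing_coloring F (n + 3) c" using pack_upper by blast
  next
    fix k assume "\<exists>c. packing_coloring F k c"
    then obtain c where c: "packing_coloring F k c" by blast
    show "n + 3 \<le> k"
    proof (rule ccontr)
      assume "\<not> n + 3 \<le> k"
      then have "k \<le> n + 2" by simp
      then show False using lower c by blast
    qed
  qed
qed

end
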